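(* Let $M$ be an entrywise nonnegative $m\times n$ real matrix and let $M=AW$ be a stable nonnegative matrix factorization with $A\in\mathbb{R}_{\ge0}^{m\times r}$, $W\in\mathbb{R}_{\ge0}^{r\times n}$. Let $s=\mathrm{rank}(A)$, let $U\subseteq[m]$ be a set of $s$ linearly independent rows of $A$, and let $B_1,\dots,B_p$ be the ensemble of $A$ at $U$. Then for each column index $i$, among the set of vectors $\mathcal S=\{B_1M_i^U,\dots,B_pM_i^U\}$, $W_i$ is the unique vector with lexicographically minimal support among all entrywise nonnegative vectors in $\mathcal S$.
   Context: Notation: $M_i$ is the $i$-th column, $M^j$ the $j$-th row; for sets of indices, $A_S$ denotes columns in $S$, $A^U$ rows in $U$, and $M_i^U$ the entries of column $M_i$ in rows $U$ (a vector in $\mathbb{R}^s$). $\mathrm{aff}(A)=\{\sum_i\alpha_iA_i:\alpha_i\ge0\}$. A subset $S\subseteq[r]$ of columns of $A$ is admissible for $v\in\mathbb{R}^m$ if $v\in\mathrm{aff}(A_S)$; a subset $T\subseteq[r]$ of rows of $W$ is admissible for a row vector $u$ if $u$ is a nonnegative combination of rows of $W^T$. Lexicographic ordering on subsets of $[r]$: if $|S|<|T|$ then $S$ precedes $T$; equal-size subsets are compared by the standard lexicographic order. Support = set of indices of nonzero entries. $M=AW$ is stable if, with $S_i$ the lexicographically first subset of columns of $A$ admissible for $M_i$ and $T_j$ the lexicographically first subset of rows of $W$ admissible for $M^j$, each $W_i$ is supported in $S_i$ and each row $A^j$ is supported in $T_j$. Ensemble: let $S_1,\dots,S_p\subseteq[r]$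 be the full list (in lexicographic order) of all sets of $s$ columns of $A$ that are linearly independent; the ensemble of $A$ at $U$ is $B_1,\dots,B_p$, where $B_k$ is the $r\times s$ matrix that is zero on all rows outside $S_k$ and whose restriction to the rows in $S_k$ equals $(A^U_{S_k})^{-1}$ (the inverse of the $s\times s$ submatrix of $A$ with rows $U$ and columns $S_k$). *)

theory Defs
  imports "Jordan_Normal_Form.DL_Rank" "Jordan_Normal_Form.Gauss_Jordan_Elimination"
begin

(* Matrices are Jordan_Normal_Form matrices; indices are 0-based, so [r] = {..<r}. *)

definition nonneg_mat :: "real mat \<Rightarrow> bool" where
  "nonneg_mat X \<longleftrightarrow> (\<forall>i<dim_row X. \<forall>j<dim_col X. X $$ (i,j) \<ge> 0)"

definition nonneg_vec :: "real vec \<Rightarrow> bool" where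
  "nonneg_vec v \<longleftrightarrow> (\<forall>i<dim_vec v. v $ i \<ge> 0)"

definition supp_vec :: "real vec \<Rightarrow> nat set" where
  "supp_vec v = {i. i < dim_vec v \<and> v $ i \<noteq> 0}"

definition set_lex_less :: "nat set \<Rightarrow> nat set \<Rightarrow> bool" where
  "set_lex_less S T \<longleftrightarrow> card S < card T \<or>
     (card S = card T \<and>
      (sorted_list_of_set S, sorted_list_of_set T) \<in> lexord {(a,b). a < b})"

definition lex_first :: "nat \<Rightarrow> (nat set \<Rightarrow> bool) \<Rightarrow> nat set" where
  "lex_first r P = (THE S. S \<subseteq> {..<r} \<and> P S \<and>
       (\<forall>T. T \<subseteq> {..<r} \<and> P T \<longrightarrow> T = S \<or> set_lex_less S T))"

definition col_admissible :: "real mat \<Rightarrow> nat set \<Rightarrow> real vec \<Rightarrow> bool" where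
  "col_admissible A S v \<longleftrightarrow> (\<exists>\<alpha>. (\<forall>j\<in>S. \<alpha> j \<ge> 0) \<and>
      v = vec (dim_row A) (\<lambda>k. \<Sum>j\<in>S. \<alpha> j * A $$ (k,j)))"

definition row_admissible :: "real mat \<Rightarrow> nat set \<Rightarrow> real vec \<Rightarrow> bool" where
  "row_admissible W T u \<longleftrightarrow> (\<exists>\<beta>. (\<forall>j\<in>T. \<beta> j \<ge> 0) \<and>
      u = vec (dim_col W) (\<lambda>k. \<Sum>j\<in>T. \<beta> j * W $$ (j,k)))"

definition stable_factorization :: "real mat \<Rightarrow> real mat \<Rightarrow> real mat \<Rightarrow> bool" where
  "stable_factorization M A W \<longleftrightarrow>
     M = A * W \<and>
     (\<forall>i<dim_col M. \<forall>l<dim_row W.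
        W $$ (l,i) \<noteq> 0 \<longrightarrow> l \<in> lex_first (dim_col A) (\<lambda>S. col_admissible A S (col M i))) \<and>
     (\<forall>j<dim_row M. \<forall>l<dim_col A.
        A $$ (j,l) \<noteq> 0 \<longrightarrow> l \<in> lex_first (dim_row W) (\<lambda>T. row_admissible W T (row M j)))"

definition cols_lin_indep :: "real mat \<Rightarrow> nat set \<Rightarrow> bool" where
  "cols_lin_indep A S \<longleftrightarrow> (\<forall>c. (\<forall>k<dim_row A. (\<Sum>j\<in>S. c j * A $$ (k,j)) = 0) \<longrightarrow> (\<forall>j\<in>S. c j = 0))"

definition rows_lin_indep :: "real mat \<Rightarrow> nat set \<Rightarrow> bool" where
  "rows_lin_indep A U \<longleftrightarrow> (\<forall>c. (\<forall>k<dim_col A. (\<Sum>j\<in>U. c j * A $$ (j,k)) = 0) \<longrightarrow> (\<forall>j\<in>U. c j = 0))"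

definition mat_rank :: "real mat \<Rightarrow> nat" where
  "mat_rank A = vec_space.rank (dim_row A) A"

definition sub_mat :: "real mat \<Rightarrow> nat set \<Rightarrow> nat set \<Rightarrow> real mat" where
  "sub_mat A U S = mat (card U) (card S)
     (\<lambda>(a,b). A $$ (sorted_list_of_set U ! a, sorted_list_of_set S ! b))"

(* the ensemble member B for the column set S: r x s matrix, zero outside the rows S,
   whose restriction to the rows S equals (A^U_S)^{-1} *)
definition ensemble_mat :: "real mat \<Rightarrow> nat set \<Rightarrow> nat set \<Rightarrow> real mat" where
  "ensemble_mat A U S = mat (dim_col A) (card U)
     (\<lambda>(j,b). if j \<in> S then the (mat_inverse (sub_mat A U S)) $$ (card {k\<in>S. k < j}, b)
              else 0)"

definition ensemble_sets :: "real mat \<Rightarrow> nat set set" where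
  "ensemble_sets A = {S. S \<subseteq> {..<dim_col A} \<and> card S = mat_rank A \<and> cols_lin_indep A S}"

definition col_restr :: "real mat \<Rightarrow> nat set \<Rightarrow> nat \<Rightarrow> real vec" where
  "col_restr M U i = vec (card U) (\<lambda>a. M $$ (sorted_list_of_set U ! a, i))"

end

theory Submission
  imports Defs
begin


definition fam_indep :: "nat \<Rightarrow> ('i \<Rightarrow> 'a::field vec) \<Rightarrow> 'i set \<Rightarrow> bool" where
 "fam_indep n v I \<longleftrightarrow> (\<forall>c. (\<forall>k<n. (\<Sum>j\<in>I. c j * v j $ k) = 0) \<longrightarrow> (\<forall>j\<in>I. c j = 0))"

lemma fam_indepD: "fam_indep n v I \<Longrightarrow> (\<And>k. k<n \<Longrightarrow> (\<Sum>j\<in>I. c j * v j $ k) = 0) \<Longrightarrow> j \<in> I \<Longrightarrow> c j = 0"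
  unfolding fam_indep_def by auto

lemma fam_indepI: "(\<And>c j. (\<And>k. k<n \<Longrightarrow> (\<Sum>j\<in>I. c j * v j $ k) = 0) \<Longrightarrow> j \<in> I \<Longrightarrow> c j = 0) \<Longrightarrow> fam_indep n v I"
  unfolding fam_indep_def by auto

context vec_space begin

lemma fam_F1:
  assumes fin: "finite I" and car: "v ` I \<subseteq> carrier_vec n" and fi: "fam_indep n v I"
  shows "inj_on v I" "lin_indpt (v ` I)"
proof -
  show inj: "inj_on v I"
  proof (rule inj_onI, rule ccontr)
    fix j1 j2 assume j: "j1 \<in> I" "j2 \<in> I" "v j1 = v j2" "j1 \<noteq> j2"
    define c where "c = (\<lambda>j. if j = j1 then (1::'a) else if j = j2 then -1 else 0)"
    have z: "\<forall>k<n. (\<Sum>j\<in>I. c j * v j $ k) = 0"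
    proof (intro allI impI)
      fix k assume "k < n"
      have "(\<Sum>j\<in>I. c j * v j $ k) = (\<Sum>j\<in>I. (if j = j1 then v j1 $ k else 0) + (if j = j2 then - v j2 $ k else 0))"
      proof (rule sum.cong[OF refl])
        fix j assume "j \<in> I"
        show "c j * v j $ k = (if j = j1 then v j1 $ k else 0) + (if j = j2 then - v j2 $ k else 0)"
        proof (cases "j = j1")
          case True thus ?thesis using j(4) by (simp add: c_def)
        next
          case False thus ?thesis using j(3) by (cases "j = j2") (simp_all add: c_def)
        qed
      qed
      also have "\<dots> = 0" using j fin by (simp add: sum.distrib)
      finally show "(\<Sum>j\<in>I. c j * v j $ k) = 0" .
    qed
    have "c j1 = 0" using fam_indepD[OF fi _ j(1), of c] z by blast
    thus False unfolding c_def by simp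
  qed
  show "lin_indpt (v ` I)"
  proof (rule finite_lin_indpt2)
    show "finite (v ` I)" using fin by simp
    show "v ` I \<subseteq> carrier_vec n" by fact
    fix a assume "lincomb a (v ` I) = 0\<^sub>v n"
    hence "\<forall>k<n. (\<Sum>j\<in>I. a (v j) * v j $ k) = 0"
    proof (intro allI impI)
      fix k assume k: "k < n" and lc: "lincomb a (v ` I) = 0\<^sub>v n"
      have "(\<Sum>j\<in>I. a (v j) * v j $ k) = (\<Sum>x\<in>v ` I. a x * x $ k)" by (simp add: sum.reindex[OF inj])
      also have "\<dots> = lincomb a (v ` I) $ k" by (rule lincomb_index[OF k car, symmetric])
      also have "\<dots> = 0" using lc k by simp
      finally show "(\<Sum>j\<in>I. a (v j) * v j $ k) = 0" .
    qed
    hence z: "\<And>k. k < n \<Longrightarrow> (\<Sum>j\<in>I. a (v j) * v j $ k) = 0" by blast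
    show "\<forall>x\<in>v ` I. a x = 0"
    proof
      fix x assume "x \<in> v ` I"
      then obtain j where jx: "j \<in> I" "x = v j" by blast
      have "(\<lambda>j. a (v j)) j = 0" by (rule fam_indepD[OF fi _ jx(1)]) (rule z)
      thus "a x = 0" using jx by simp
    qed
  qed
qed

lemma fam_F2:
  assumes fin: "finite I" and car: "v ` I \<subseteq> carrier_vec n" and inj: "inj_on v I"
    and li: "lin_indpt (v ` I)"
  shows "fam_indep n v I"
  unfolding fam_indep_def
proof (intro allI impI)
  fix c assume h: "\<forall>k<n. (\<Sum>j\<in>I. c j * v j $ k) = 0"
  define a where "a = (\<lambda>x. c (inv_into I v x))"
  have "lincomb a (v ` I) = 0\<^sub>v n"
  proof (rule eq_vecI)
    have "lincomb a (v ` I) \<in> carrier_vec n" using lincomb_closed car fin by auto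
    thus "dim_vec (lincomb a (v ` I)) = dim_vec (0\<^sub>v n)" by simp
    fix k assume "k < dim_vec (0\<^sub>v n)"
    hence k: "k < n" by simp
    have "lincomb a (v ` I) $ k = (\<Sum>x\<in>v ` I. a x * x $ k)" by (rule lincomb_index[OF k car])
    also have "\<dots> = (\<Sum>j\<in>I. a (v j) * v j $ k)" by (simp add: sum.reindex[OF inj])
    also have "\<dots> = (\<Sum>j\<in>I. c j * v j $ k)"
      by (rule sum.cong, auto simp: a_def inv_into_f_f[OF inj])
    finally show "lincomb a (v ` I) $ k = 0\<^sub>v n $ k" using h k by simp
  qed
  from not_lindepD[OF li _ _ _ this] fin
  have a0: "a \<in> v ` I \<rightarrow> {0}" by auto
  show "\<forall>j\<in>I. c j = 0"
  proof
    fix j assume j: "j \<in> I"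
    have "a (v j) = 0" using a0 j by auto
    thus "c j = 0" unfolding a_def using inv_into_f_f[OF inj j] by simp
  qed
qed

lemma fam_F3:
  fixes v :: "'i \<Rightarrow> 'a vec"
  assumes fin: "finite I" and car: "v ` I \<subseteq> carrier_vec n" and fi: "fam_indep n v I"
  shows "card I \<le> n"
proof -
  have "card (v ` I) \<le> n" using li_le_dim(2)[OF fin_dim car fam_F1(2)[OF assms]] dim_is_n by simp
  thus ?thesis using card_image[OF fam_F1(1)[OF assms]] by simp
qed

lemma set_cols_eq: "set (cols A) = col A ` {..<dim_col A}"
  unfolding cols_def by auto

lemma fam_F4:
  assumes A: "A \<in> carrier_mat n nc" and I: "I \<subseteq> {..<nc}" and fi: "fam_indep n (col A) I"
  shows "\<exists>J. I \<subseteq> J \<and> J \<subseteq> {..<nc} \<and> card J = rank A \<and> fam_indep n (col A) J"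
proof -
  have finI: "finite I" using I finite_subset by blast
  have sc: "set (cols A) = col A ` {..<nc}" using A set_cols_eq by auto
  have carc: "col A ` {..<nc} \<subseteq> carrier_vec n" using A by auto
  let ?P = "\<lambda>T. T \<subseteq> set (cols A) \<and> lin_indpt T"
  let ?T0 = "col A ` I"
  have carI: "col A ` I \<subseteq> carrier_vec n" using carc I by auto
  have injI: "inj_on (col A) I" using fam_F1[OF finI carI fi] by simp
  have "?P ?T0" using fam_F1[OF finI carI fi] sc I by auto
  from maximal_exists_superset[of "set (cols A)" ?P ?T0, OF _ _ this]
  obtain T where T: "finite T" "maximal T ?P" "?T0 \<subseteq> T" by auto
  have PT: "?P T" using T(2) unfolding maximal_def by auto
  have rk: "rank A = card T" using rank_card_indpt[OF A T(2)] .
  define g where "g = (\<lambda>w. SOME j. j < nc \<and> col A j = w)"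
  have g: "g w < nc \<and> col A (g w) = w" if "w \<in> T" for w
  proof -
    have "\<exists>j. j < nc \<and> col A j = w" using that PT sc by auto
    thus ?thesis unfolding g_def by (rule someI_ex)
  qed
  define J where "J = I \<union> g ` (T - ?T0)"
  have injg: "inj_on (col A) (g ` (T - ?T0))"
  proof (rule inj_onI)
    fix x y assume x: "x \<in> g ` (T - ?T0)" and y: "y \<in> g ` (T - ?T0)" and e: "col A x = col A y"
    from x obtain w1 where w1: "w1 \<in> T" "x = g w1" by auto
    from y obtain w2 where w2: "w2 \<in> T" "y = g w2" by auto
    have "w1 = w2" using g[OF w1(1)] g[OF w2(1)] e w1(2) w2(2) by simp
    thus "x = y" using w1 w2 by simp
  qed
  have img: "col A ` (g ` (T - ?T0)) = T - ?T0"
  proof -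
    have "col A ` (g ` (T - ?T0)) = (\<lambda>w. col A (g w)) ` (T - ?T0)" by (simp add: image_image)
    also have "\<dots> = (\<lambda>w. w) ` (T - ?T0)" by (rule image_cong) (use g in auto)
    finally show ?thesis by simp
  qed
  have d1: "col A ` (I - g ` (T - ?T0)) \<subseteq> ?T0" by blast
  have d2: "col A ` (g ` (T - ?T0) - I) \<subseteq> T - ?T0" using img by blast
  have "col A ` (I - g ` (T - ?T0)) \<inter> col A ` (g ` (T - ?T0) - I) = {}"
    using d1 d2 by blast
  hence injJ: "inj_on (col A) J" unfolding J_def
    using injI injg inj_on_Un by blast
  have imJ: "col A ` J = T" unfolding J_def image_Un img using T(3) by auto
  have JS: "J \<subseteq> {..<nc}" unfolding J_def using I g by auto
  have finJ: "finite J" using JS finite_subset by blast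
  have carJ: "col A ` J \<subseteq> carrier_vec n" using carc JS by auto
  have "fam_indep n (col A) J" using fam_F2[OF finJ carJ injJ] imJ PT by simp
  moreover have "card J = rank A" using rk card_image[OF injJ] imJ by simp
  ultimately show ?thesis using JS J_def by auto
qed

lemma fam_F5:
  assumes A: "A \<in> carrier_mat n nc" and I: "I \<subseteq> {..<nc}" and fi: "fam_indep n (col A) I"
    and cI: "card I = rank A" and l: "l < nc"
  shows "\<exists>c. \<forall>k<n. A $$ (k,l) = (\<Sum>t\<in>I. c t * A $$ (k,t))"
proof -
  have finI: "finite I" using I finite_subset by blast
  have sc: "set (cols A) = col A ` {..<nc}" using A set_cols_eq by auto
  have carc: "col A ` {..<nc} \<subseteq> carrier_vec n" using A by auto
  let ?T = "col A ` I"
  have carI: "?T \<subseteq> carrier_vec n" using carc I by auto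
  have injI: "inj_on (col A) I" and li: "lin_indpt ?T" using fam_F1[OF finI carI fi] by auto
  have cT: "card ?T = rank A" using card_image[OF injI] cI by simp
  have v: "col A l \<in> carrier_vec n" using A l by auto
  have "col A l \<in> span ?T"
  proof (cases "col A l \<in> ?T")
    case True thus ?thesis using in_own_span[OF carI] by auto
  next
    case False
    show ?thesis
    proof (rule ccontr)
      assume "col A l \<notin> span ?T"
      hence li2: "lin_indpt (?T \<union> {col A l})" using lin_dep_iff_in_span[OF carI li v False] by simp
      have "?T \<union> {col A l} \<subseteq> set (cols A)" using sc I l by auto
      from rank_ge_card_indpt[OF A this li2] have "card (?T \<union> {col A l}) \<le> rank A" .
      moreover have "card (?T \<union> {col A l}) = Suc (card ?T)" using False finI by simp
      ultimately show False using cT by simp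
    qed
  qed
  from finite_in_span[OF _ carI this] finI obtain a where a: "lincomb a ?T = col A l" by auto
  show ?thesis
  proof (intro exI allI impI)
    fix k assume k: "k < n"
    have "A $$ (k,l) = col A l $ k" using A k l by simp
    also have "\<dots> = lincomb a ?T $ k" using a by simp
    also have "\<dots> = (\<Sum>x\<in>?T. a x * x $ k)" by (rule lincomb_index[OF k carI])
    also have "\<dots> = (\<Sum>t\<in>I. a (col A t) * col A t $ k)" by (simp add: sum.reindex[OF injI])
    also have "\<dots> = (\<Sum>t\<in>I. (a \<circ> col A) t * A $$ (k,t))"
      by (rule sum.cong) (use A k I in auto)
    finally show "A $$ (k,l) = (\<Sum>t\<in>I. (a \<circ> col A) t * A $$ (k,t))" .
  qed
qed

end



section \<open>Lexicographic order\<close>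

lemma lex_irrefl: "\<not> set_lex_less S S"
  unfolding set_lex_less_def using lexord_irreflexive[of "{(a,b). (a::nat) < b}"] by auto

lemma lexr_trans: "trans {(a,b). (a::nat) < b}" by (auto simp: trans_def)

lemma lex_trans: "set_lex_less S T \<Longrightarrow> set_lex_less T R \<Longrightarrow> set_lex_less S R"
  unfolding set_lex_less_def using lexord_trans[OF _ _ lexr_trans] by auto

lemma lex_asym: "set_lex_less S T \<Longrightarrow> \<not> set_lex_less T S"
  using lex_trans lex_irrefl by blast

lemma lex_total:
  assumes "finite S" "finite T" "S \<noteq> T"
  shows "set_lex_less S T \<or> set_lex_less T S"
proof -
  have "sorted_list_of_set S \<noteq> sorted_list_of_set T"
    using assms set_sorted_list_of_set by metis
  moreover have "\<forall>a b. (a, b) \<in> {(a,b). (a::nat) < b} \<or> a = b \<or> (b, a) \<in> {(a,b). (a::nat) < b}" by auto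
  ultimately have "(sorted_list_of_set S, sorted_list_of_set T) \<in> lexord {(a,b). a < b} \<or>
     (sorted_list_of_set T, sorted_list_of_set S) \<in> lexord {(a,b). a < b}"
    using lexord_linear by blast
  thus ?thesis unfolding set_lex_less_def by auto
qed

lemma lex_card_less: "card S < card T \<Longrightarrow> \<not> set_lex_less T S"
  unfolding set_lex_less_def by auto

lemma lex_min_exists:
  assumes "finite F" "F \<noteq> {}" "\<forall>X\<in>F. finite X"
  shows "\<exists>m\<in>F. \<forall>T\<in>F. T = m \<or> set_lex_less m T"
  using assms
proof (induction F rule: finite_ne_induct)
  case (singleton x)
  show ?case by (rule bexI[of _ x]) simp_all
next
  case (insert x F)
  from insert.IH insert.prems obtain m where m: "m \<in> F" "\<forall>T\<in>F. T = m \<or> set_lex_less m T" by auto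
  have fx: "finite x" "finite m" using insert.prems m(1) by auto
  show ?case
  proof (cases "x = m \<or> set_lex_less m x")
    case True
    have "\<forall>T\<in>insert x F. T = m \<or> set_lex_less m T" using True m(2) by blast
    thus ?thesis using m(1) by blast
  next
    case False
    hence "x \<noteq> m" by blast
    hence xm: "set_lex_less x m" using lex_total[OF fx] False by blast
    have "\<forall>T\<in>insert x F. T = x \<or> set_lex_less x T"
    proof
      fix T assume "T \<in> insert x F"
      hence "T = x \<or> T = m \<or> set_lex_less m T" using m(2) by blast
      thus "T = x \<or> set_lex_less x T" using xm lex_trans[OF xm] by blast
    qed
    thus ?thesis by blast
  qed
qed

lemma lex_first_char:
  assumes "T0 \<subseteq> {..<r}" "P T0"
  shows "lex_first r P \<subseteq> {..<r} \<and> P (lex_first r P) \<and>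
     (\<forall>T. T \<subseteq> {..<r} \<and> P T \<longrightarrow> T = lex_first r P \<or> set_lex_less (lex_first r P) T)"
proof -
  let ?F = "{T. T \<subseteq> {..<r} \<and> P T}"
  have "?F \<subseteq> Pow {..<r}" by blast
  hence fin: "finite ?F" by (rule finite_subset) simp
  have ne: "?F \<noteq> {}" using assms by blast
  have fx: "\<forall>X\<in>?F. finite X"
  proof
    fix X assume "X \<in> ?F"
    hence "X \<subseteq> {..<r}" by blast
    thus "finite X" by (rule finite_subset) simp
  qed
  obtain m where m: "m \<in> ?F" "\<forall>T\<in>?F. T = m \<or> set_lex_less m T"
    using lex_min_exists[OF fin ne fx] by blast
  let ?Q = "\<lambda>S. S \<subseteq> {..<r} \<and> P S \<and> (\<forall>T. T \<subseteq> {..<r} \<and> P T \<longrightarrow> T = S \<or> set_lex_less S T)"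
  have Qm: "?Q m" using m by blast
  have uq: "\<And>S. ?Q S \<Longrightarrow> S = m"
  proof -
    fix S assume QS: "?Q S"
    have "m = S \<or> set_lex_less S m" using QS m(1) by blast
    moreover have "S = m \<or> set_lex_less m S" using QS m(2) by blast
    ultimately show "S = m" using lex_asym by blast
  qed
  have "lex_first r P = m" unfolding lex_first_def
    by (rule the_equality) (rule Qm, rule uq)
  thus ?thesis using Qm by simp
qed

lemma cols_lin_indepD: "cols_lin_indep A S \<Longrightarrow> (\<And>k. k < dim_row A \<Longrightarrow> (\<Sum>j\<in>S. c j * A $$ (k,j)) = 0) \<Longrightarrow> j \<in> S \<Longrightarrow> c j = 0"
  unfolding cols_lin_indep_def by auto

lemma rows_lin_indepD: "rows_lin_indep A U \<Longrightarrow> (\<And>k. k < dim_col A \<Longrightarrow> (\<Sum>j\<in>U. c j * A $$ (j,k)) = 0) \<Longrightarrow> j \<in> U \<Longrightarrow> c j = 0"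
  unfolding rows_lin_indep_def by auto

lemma cols_lin_indep_fam:
  assumes A: "A \<in> carrier_mat m r" and S: "S \<subseteq> {..<r}"
  shows "cols_lin_indep A S \<longleftrightarrow> fam_indep m (col A) S"
proof -
  have "\<And>c k. k < m \<Longrightarrow> (\<Sum>j\<in>S. c j * A $$ (k,j)) = (\<Sum>j\<in>S. c j * col A j $ k)"
    by (rule sum.cong) (use A S in auto)
  hence e: "\<And>c k. k < m \<Longrightarrow> (\<Sum>j\<in>S. c j * A $$ (k,j)) = (\<Sum>j\<in>S. c j * col A j $ k)" .
  have dr: "dim_row A = m" using A by simp
  show ?thesis
  proof
    assume cl: "cols_lin_indep A S"
    show "fam_indep m (col A) S"
    proof (rule fam_indepI)
      fix c j assume h: "\<And>k. k < m \<Longrightarrow> (\<Sum>j\<in>S. c j * col A j $ k) = 0" and j: "j \<in> S"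
      show "c j = 0"
      proof (rule cols_lin_indepD[OF cl _ j])
        fix k assume "k < dim_row A"
        thus "(\<Sum>j\<in>S. c j * A $$ (k,j)) = 0" using h e dr by simp
      qed
    qed
  next
    assume fi: "fam_indep m (col A) S"
    show "cols_lin_indep A S"
      unfolding cols_lin_indep_def
    proof (intro allI impI ballI)
      fix c j assume h: "\<forall>k<dim_row A. (\<Sum>j\<in>S. c j * A $$ (k,j)) = 0" and j: "j \<in> S"
      show "c j = 0"
      proof (rule fam_indepD[OF fi _ j])
        fix k assume "k < m"
        thus "(\<Sum>j\<in>S. c j * col A j $ k) = 0" using h e dr by simp
      qed
    qed
  qed
qed

lemma mult_supp:
  fixes A :: "real mat"
  assumes A: "A \<in> carrier_mat m r" and x: "x \<in> carrier_vec r" and k: "k < m"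
    and S: "S \<subseteq> {..<r}" and zero: "\<And>j. j < r \<Longrightarrow> j \<notin> S \<Longrightarrow> x $ j = 0"
  shows "(A *\<^sub>v x) $ k = (\<Sum>j\<in>S. x $ j * A $$ (k,j))"
proof -
  have "(A *\<^sub>v x) $ k = (\<Sum>j\<in>{..<r}. A $$ (k,j) * x $ j)"
    using A x k by (auto simp: scalar_prod_def lessThan_atLeast0)
  also have "\<dots> = (\<Sum>j\<in>S. A $$ (k,j) * x $ j)"
    by (rule sum.mono_neutral_right) (use S zero in auto)
  also have "\<dots> = (\<Sum>j\<in>S. x $ j * A $$ (k,j))" by (intro sum.cong refl) (rule mult.commute)
  finally show ?thesis .
qed

lemma supp_sub: "supp_vec x \<subseteq> {..<dim_vec x}" unfolding supp_vec_def by auto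

lemma uniq_supp:
  fixes A :: "real mat"
  assumes A: "A \<in> carrier_mat m r" and S: "S \<subseteq> {..<r}" and ind: "cols_lin_indep A S"
    and x: "x \<in> carrier_vec r" and w: "w \<in> carrier_vec r"
    and zx: "\<And>j. j < r \<Longrightarrow> j \<notin> S \<Longrightarrow> x $ j = 0"
    and zw: "\<And>j. j < r \<Longrightarrow> j \<notin> S \<Longrightarrow> w $ j = 0"
    and eq: "A *\<^sub>v x = A *\<^sub>v w"
  shows "x = w"
proof -
  have "\<forall>k<m. (\<Sum>j\<in>S. (x $ j - w $ j) * A $$ (k,j)) = 0"
  proof (intro allI impI)
    fix k assume k: "k < m"
    have "(\<Sum>j\<in>S. (x $ j - w $ j) * A $$ (k,j)) = (\<Sum>j\<in>S. x $ j * A $$ (k,j)) - (\<Sum>j\<in>S. w $ j * A $$ (k,j))"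
      by (simp add: left_diff_distrib sum_subtractf)
    also have "\<dots> = (A *\<^sub>v x) $ k - (A *\<^sub>v w) $ k"
      using mult_supp[OF A x k S zx] mult_supp[OF A w k S zw] by simp
    finally show "(\<Sum>j\<in>S. (x $ j - w $ j) * A $$ (k,j)) = 0" using eq by simp
  qed
  hence z: "\<And>k. k < dim_row A \<Longrightarrow> (\<Sum>j\<in>S. (x $ j - w $ j) * A $$ (k,j)) = 0" using A by auto
  have c: "\<forall>j\<in>S. x $ j - w $ j = 0"
  proof
    fix j assume j: "j \<in> S"
    show "x $ j - w $ j = 0"
      using cols_lin_indepD[OF ind, where c="\<lambda>j. x $ j - w $ j", OF z j] by simp
  qed
  show ?thesis
  proof (rule eq_vecI)
    show "dim_vec x = dim_vec w" using x w by simp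
    fix j assume "j < dim_vec w"
    hence j: "j < r" using w by simp
    show "x $ j = w $ j"
    proof (cases "j \<in> S")
      case True thus ?thesis using c by auto
    next
      case False thus ?thesis using zx[OF j] zw[OF j] by simp
    qed
  qed
qed

lemma rowcomb:
  fixes A :: "real mat"
  assumes A: "A \<in> carrier_mat m r" and z: "z \<in> carrier_vec r" and k: "k < m"
    and U: "U \<subseteq> {..<m}" and d: "\<forall>l<r. A $$ (k,l) = (\<Sum>u\<in>U. d u * A $$ (u,l))"
  shows "(A *\<^sub>v z) $ k = (\<Sum>u\<in>U. d u * (A *\<^sub>v z) $ u)"
proof -
  have e: "\<And>k'. k' < m \<Longrightarrow> (A *\<^sub>v z) $ k' = (\<Sum>l\<in>{..<r}. A $$ (k',l) * z $ l)"
    using A z by (auto simp: scalar_prod_def lessThan_atLeast0)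
  have "(A *\<^sub>v z) $ k = (\<Sum>l\<in>{..<r}. (\<Sum>u\<in>U. d u * A $$ (u,l)) * z $ l)"
    unfolding e[OF k] by (rule sum.cong) (use d in auto)
  also have "\<dots> = (\<Sum>u\<in>U. d u * (\<Sum>l\<in>{..<r}. A $$ (u,l) * z $ l))"
  proof -
    have "(\<Sum>l\<in>{..<r}. (\<Sum>u\<in>U. d u * A $$ (u,l)) * z $ l) = (\<Sum>l\<in>{..<r}. \<Sum>u\<in>U. d u * A $$ (u,l) * z $ l)"
      by (simp add: sum_distrib_right)
    also have "\<dots> = (\<Sum>u\<in>U. \<Sum>l\<in>{..<r}. d u * A $$ (u,l) * z $ l)" by (rule sum.swap)
    also have "\<dots> = (\<Sum>u\<in>U. d u * (\<Sum>l\<in>{..<r}. A $$ (u,l) * z $ l))"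
      by (simp add: sum_distrib_left mult.assoc)
    finally show ?thesis .
  qed
  also have "\<dots> = (\<Sum>u\<in>U. d u * (A *\<^sub>v z) $ u)"
    by (rule sum.cong) (use e U in auto)
  finally show ?thesis .
qed

section \<open>Sorted lists\<close>

lemma sl_idx:
  assumes fin: "finite S" and b: "b < card S"
  shows "card {k\<in>S. k < sorted_list_of_set S ! b} = b"
proof -
  let ?ss = "sorted_list_of_set S"
  have len: "length ?ss = card S" by simp
  have st: "sorted_wrt (<) ?ss" by (rule strict_sorted_list_of_set)
  have "{k\<in>S. k < ?ss ! b} = set (take b ?ss)"
  proof
    show "{k\<in>S. k < ?ss ! b} \<subseteq> set (take b ?ss)"
    proof
      fix k assume "k \<in> {k\<in>S. k < ?ss ! b}"
      hence k: "k \<in> set ?ss" "k < ?ss ! b" using fin by auto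
      then obtain q where q: "q < length ?ss" "k = ?ss ! q" by (auto simp: in_set_conv_nth)
      have "q < b"
      proof (rule ccontr)
        assume "\<not> q < b"
        hence "b < q \<or> b = q" by auto
        thus False
        proof
          assume "b < q" thus False using sorted_wrt_nth_less[OF st _ q(1)] k q by fastforce
        next
          assume "b = q" thus False using k q by simp
        qed
      qed
      thus "k \<in> set (take b ?ss)" using q b len by (auto simp: in_set_conv_nth)
    qed
  next
    show "set (take b ?ss) \<subseteq> {k\<in>S. k < ?ss ! b}"
    proof
      fix k assume "k \<in> set (take b ?ss)"
      then obtain q where q: "q < b" "k = ?ss ! q" using b len by (auto simp: in_set_conv_nth)
      have "k < ?ss ! b" using sorted_wrt_nth_less[OF st q(1)] q b len by simp
      moreover have "k \<in> S" using q b len fin nth_mem[of q ?ss] by auto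
      ultimately show "k \<in> {k\<in>S. k < ?ss ! b}" by simp
    qed
  qed
  moreover have "card (set (take b ?ss)) = b"
  proof -
    have "distinct (take b ?ss)" by (rule distinct_take[OF distinct_sorted_list_of_set])
    hence "card (set (take b ?ss)) = length (take b ?ss)" by (rule distinct_card)
    also have "\<dots> = b" using b len by simp
    finally show ?thesis .
  qed
  ultimately show ?thesis by simp
qed

lemma sl_sum:
  assumes fin: "finite S"
  shows "(\<Sum>b<card S. f (sorted_list_of_set S ! b)) = (\<Sum>j\<in>S. f j)"
proof -
  let ?ss = "sorted_list_of_set S"
  have inj: "inj_on (\<lambda>b. ?ss ! b) {..<card S}"
    using distinct_sorted_list_of_set[of S] by (auto simp: inj_on_def nth_eq_iff_index_eq)
  have "set ?ss = (\<lambda>b. ?ss ! b) ` {..<length ?ss}" by (auto simp: set_conv_nth)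
  hence im: "(\<lambda>b. ?ss ! b) ` {..<card S} = S" using fin by simp
  show ?thesis using sum.reindex[OF inj, of f] im by simp
qed

lemma sl_nth_idx:
  assumes fin: "finite S" and j: "j \<in> S"
  shows "card {k\<in>S. k < j} < card S \<and> sorted_list_of_set S ! card {k\<in>S. k < j} = j"
proof -
  obtain b where b: "b < card S" "j = sorted_list_of_set S ! b"
    using j fin by (metis in_set_conv_nth length_sorted_list_of_set set_sorted_list_of_set)
  thus ?thesis using sl_idx[OF fin b(1)] by simp
qed




lemma fam_indep_empty: "fam_indep m v {}"
  by (rule fam_indepI) simp

lemma row_span:
  fixes A :: "real mat"
  assumes A: "A \<in> carrier_mat m r" and U: "U \<subseteq> {..<m}" and cU: "card U = mat_rank A"
    and ri: "rows_lin_indep A U" and k: "k < m"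
  shows "\<exists>d. \<forall>l<r. A $$ (k,l) = (\<Sum>u\<in>U. d u * A $$ (u,l))"
proof (rule ccontr)
  assume nd: "\<not> (\<exists>d. \<forall>l<r. A $$ (k,l) = (\<Sum>u\<in>U. d u * A $$ (u,l)))"
  have nd': "\<And>d. \<not> (\<forall>l<r. A $$ (k,l) = (\<Sum>u\<in>U. d u * A $$ (u,l)))" using nd by blast
  let ?s = "mat_rank A"
  have rk: "mat_rank A = vec_space.rank m A" unfolding mat_rank_def using A by simp
  obtain S0 where S0: "S0 \<subseteq> {..<r}" "card S0 = ?s" "fam_indep m (col A) S0"
    using vec_space.fam_F4[OF A, of "{}"] fam_indep_empty rk by auto
  have finS0: "finite S0" using S0(1) finite_subset by blast
  have "\<forall>l. \<exists>c. l < r \<longrightarrow> (\<forall>k<m. A $$ (k,l) = (\<Sum>t\<in>S0. c t * A $$ (k,t)))"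
  proof
    fix l
    show "\<exists>c. l < r \<longrightarrow> (\<forall>k<m. A $$ (k,l) = (\<Sum>t\<in>S0. c t * A $$ (k,t)))"
    proof (cases "l < r")
      case True
      have "card S0 = vec_space.rank m A" using S0(2) rk by simp
      from vec_space.fam_F5[OF A S0(1) S0(3) this True] show ?thesis by blast
    qed simp
  qed
  from choice[OF this] obtain C where C0: "\<forall>l. l < r \<longrightarrow> (\<forall>k<m. A $$ (k,l) = (\<Sum>t\<in>S0. C l t * A $$ (k,t)))"
    by blast
  have C: "\<And>l k. l < r \<Longrightarrow> k < m \<Longrightarrow> A $$ (k,l) = (\<Sum>t\<in>S0. C l t * A $$ (k,t))"
    using C0 by blast
  have finU: "finite U" using U finite_subset by blast
  have kU: "k \<notin> U"
  proof
    assume kU: "k \<in> U"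
    have "\<forall>l<r. A $$ (k,l) = (\<Sum>u\<in>U. (if u = k then 1 else 0) * A $$ (u,l))"
    proof (intro allI impI)
      fix l assume "l < r"
      have "(\<Sum>u\<in>U. (if u = k then 1 else 0) * A $$ (u,l)) = (\<Sum>u\<in>U. if u = k then A $$ (u,l) else 0)"
        by (rule sum.cong) auto
      also have "\<dots> = A $$ (k,l)" using finU kU by simp
      finally show "A $$ (k,l) = (\<Sum>u\<in>U. (if u = k then 1 else 0) * A $$ (u,l))" by simp
    qed
    thus False using nd'[of "\<lambda>u. if u = k then 1 else 0"] by blast
  qed
  let ?U' = "insert k U"
  let ?ss = "sorted_list_of_set S0"
  define w where "w = (\<lambda>u. vec ?s (\<lambda>b. A $$ (u, ?ss ! b)) :: real vec)"
  have U'm: "?U' \<subseteq> {..<m}" using U k by auto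
  have fi: "fam_indep ?s w ?U'"
  proof (rule fam_indepI)
    fix e j assume h: "\<And>b. b < ?s \<Longrightarrow> (\<Sum>u\<in>?U'. e u * w u $ b) = 0" and j: "j \<in> ?U'"
    have h1: "(\<Sum>u\<in>?U'. e u * A $$ (u,t)) = 0" if t: "t \<in> S0" for t
    proof -
      obtain b where b: "b < card S0" "?ss ! b = t" using sl_nth_idx[OF finS0 t] by blast
      have "(\<Sum>u\<in>?U'. e u * A $$ (u,t)) = (\<Sum>u\<in>?U'. e u * w u $ b)"
        by (rule sum.cong) (use b S0(2) in \<open>auto simp: w_def\<close>)
      also have "\<dots> = 0" using h b S0(2) by simp
      finally show ?thesis .
    qed
    have h2: "(\<Sum>u\<in>?U'. e u * A $$ (u,l)) = 0" if l: "l < r" for l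
    proof -
      have "(\<Sum>u\<in>?U'. e u * A $$ (u,l)) = (\<Sum>u\<in>?U'. e u * (\<Sum>t\<in>S0. C l t * A $$ (u,t)))"
        by (rule sum.cong) (use C[OF l] U'm in auto)
      also have "\<dots> = (\<Sum>u\<in>?U'. \<Sum>t\<in>S0. C l t * (e u * A $$ (u,t)))"
        by (simp add: sum_distrib_left ac_simps)
      also have "\<dots> = (\<Sum>t\<in>S0. \<Sum>u\<in>?U'. C l t * (e u * A $$ (u,t)))" by (rule sum.swap)
      also have "\<dots> = (\<Sum>t\<in>S0. C l t * (\<Sum>u\<in>?U'. e u * A $$ (u,t)))"
        by (simp add: sum_distrib_left)
      also have "\<dots> = 0" using h1 by simp
      finally show ?thesis .
    qed
    have split: "(\<Sum>u\<in>?U'. e u * A $$ (u,l)) = e k * A $$ (k,l) + (\<Sum>u\<in>U. e u * A $$ (u,l))" for l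
      using finU kU by simp
    have ek: "e k = 0"
    proof (rule ccontr)
      assume ek: "e k \<noteq> 0"
      have "\<forall>l<r. A $$ (k,l) = (\<Sum>u\<in>U. (- e u / e k) * A $$ (u,l))"
      proof (intro allI impI)
        fix l assume l: "l < r"
        have "e k * A $$ (k,l) = - (\<Sum>u\<in>U. e u * A $$ (u,l))" using h2[OF l] split[of l] by simp
        hence "A $$ (k,l) = - (\<Sum>u\<in>U. e u * A $$ (u,l)) / e k" using ek by (simp add: field_simps)
        also have "\<dots> = (\<Sum>u\<in>U. (- e u / e k) * A $$ (u,l))"
          by (simp add: sum_divide_distrib sum_negf)
        finally show "A $$ (k,l) = (\<Sum>u\<in>U. (- e u / e k) * A $$ (u,l))" .
      qed
      thus False using nd'[of "\<lambda>u. - e u / e k"] by blast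
    qed
    have eU: "e u = 0" if u: "u \<in> U" for u
    proof (rule rows_lin_indepD[OF ri _ u])
      fix l assume "l < dim_col A"
      hence l: "l < r" using A by simp
      show "(\<Sum>j\<in>U. e j * A $$ (j,l)) = 0" using h2[OF l] split[of l] ek by simp
    qed
    show "e j = 0" using j ek eU by blast
  qed
  have car: "w ` ?U' \<subseteq> carrier_vec ?s" unfolding w_def by auto
  have "card ?U' \<le> ?s" by (rule vec_space.fam_F3[OF _ car fi]) (use finU in simp)
  moreover have "card ?U' = Suc ?s" using finU kU cU by simp
  ultimately show False by simp
qed


lemma sub_mat_carrier: "sub_mat A U S \<in> carrier_mat (card U) (card S)"
  unfolding sub_mat_def by simp

lemma sub_inv:
  fixes A :: "real mat"
  assumes A: "A \<in> carrier_mat m r" and U: "U \<subseteq> {..<m}" and cU: "card U = mat_rank A"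
    and ri: "rows_lin_indep A U" and S: "S \<in> ensemble_sets A"
  shows "\<exists>Q. mat_inverse (sub_mat A U S) = Some Q \<and> sub_mat A U S * Q = 1\<^sub>m (card U)
     \<and> Q \<in> carrier_mat (card U) (card U)"
proof -
  let ?s = "card U"
  let ?P = "sub_mat A U S"
  let ?us = "sorted_list_of_set U"
  let ?ss = "sorted_list_of_set S"
  have Sr: "S \<subseteq> {..<r}" and cS: "card S = ?s" and ci: "cols_lin_indep A S"
    using S A cU unfolding ensemble_sets_def by auto
  have finS: "finite S" using Sr finite_subset by blast
  have finU: "finite U" using U finite_subset by blast
  have P: "?P \<in> carrier_mat ?s ?s" using sub_mat_carrier[of A U S] cS by simp
  have "det ?P \<noteq> 0"
  proof
    assume "det ?P = 0"
    then obtain y where y: "y \<in> carrier_vec ?s" "y \<noteq> 0\<^sub>v ?s" "?P *\<^sub>v y = 0\<^sub>v ?s"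
      using det_0_iff_vec_prod_zero[OF P] by blast
    define z where "z = (\<lambda>j. y $ card {k\<in>S. k < j})"
    have zU: "(\<Sum>j\<in>S. z j * A $$ (u,j)) = 0" if u: "u \<in> U" for u
    proof -
      obtain a where a: "a < ?s" "?us ! a = u"
        using sl_nth_idx[OF finU u] by blast
      have "0 = (?P *\<^sub>v y) $ a" using y(3) a by simp
      also have "\<dots> = (\<Sum>b<?s. ?P $$ (a,b) * y $ b)"
        using P y(1) a by (simp add: scalar_prod_def lessThan_atLeast0)
      also have "\<dots> = (\<Sum>b<card S. A $$ (u, ?ss ! b) * z (?ss ! b))"
        by (rule sum.cong) (use a cS sl_idx[OF finS] in \<open>auto simp: sub_mat_def z_def\<close>)
      also have "\<dots> = (\<Sum>j\<in>S. A $$ (u, j) * z j)"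
        by (rule sl_sum[OF finS, of "\<lambda>j. A $$ (u, j) * z j"])
      finally show ?thesis by (simp add: mult.commute)
    qed
    have zall: "(\<Sum>j\<in>S. z j * A $$ (k,j)) = 0" if k: "k < m" for k
    proof -
      obtain d where d: "\<forall>l<r. A $$ (k,l) = (\<Sum>u\<in>U. d u * A $$ (u,l))"
        using row_span[OF A U cU ri k] by blast
      have "(\<Sum>j\<in>S. z j * A $$ (k,j)) = (\<Sum>j\<in>S. z j * (\<Sum>u\<in>U. d u * A $$ (u,j)))"
        by (rule sum.cong) (use d Sr in auto)
      also have "\<dots> = (\<Sum>j\<in>S. \<Sum>u\<in>U. d u * (z j * A $$ (u,j)))"
        by (simp add: sum_distrib_left ac_simps)
      also have "\<dots> = (\<Sum>u\<in>U. \<Sum>j\<in>S. d u * (z j * A $$ (u,j)))" by (rule sum.swap)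
      also have "\<dots> = (\<Sum>u\<in>U. d u * (\<Sum>j\<in>S. z j * A $$ (u,j)))" by (simp add: sum_distrib_left)
      also have "\<dots> = 0" using zU by simp
      finally show ?thesis .
    qed
    have z0: "z j = 0" if j: "j \<in> S" for j
      by (rule cols_lin_indepD[OF ci _ j]) (use zall A in simp)
    have "y = 0\<^sub>v ?s"
    proof (rule eq_vecI)
      show "dim_vec y = dim_vec (0\<^sub>v ?s)" using y(1) by simp
      fix b assume "b < dim_vec (0\<^sub>v ?s)"
      hence b: "b < card S" using cS by simp
      have "?ss ! b \<in> S" using b finS nth_mem[of b ?ss] by simp
      hence "z (?ss ! b) = 0" by (rule z0)
      thus "y $ b = 0\<^sub>v ?s $ b" using sl_idx[OF finS b] b cS by (simp add: z_def)
    qed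
    thus False using y(2) by simp
  qed
  from det_non_zero_imp_unit[OF P this] have "?P \<in> Units (ring_mat TYPE(real) ?s ())" .
  hence "mat_inverse ?P \<noteq> None" using mat_inverse(1)[OF P] by metis
  then obtain Q where Q: "mat_inverse ?P = Some Q" by blast
  from mat_inverse(2)[OF P Q] Q show ?thesis by blast
qed


lemma ens_apply:
  fixes A M W :: "real mat"
  assumes A: "A \<in> carrier_mat m r" and W: "W \<in> carrier_mat r n" and MAW: "M = A * W" and i: "i < n"
    and U: "U \<subseteq> {..<m}" and cU: "card U = mat_rank A"
    and ri: "rows_lin_indep A U" and S: "S \<in> ensemble_sets A"
  shows "ensemble_mat A U S *\<^sub>v col_restr M U i \<in> carrier_vec r"
    "\<And>j. j < r \<Longrightarrow> j \<notin> S \<Longrightarrow> (ensemble_mat A U S *\<^sub>v col_restr M U i) $ j = 0"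
    "A *\<^sub>v (ensemble_mat A U S *\<^sub>v col_restr M U i) = col M i"
proof -
  let ?s = "card U"
  let ?P = "sub_mat A U S"
  let ?E = "ensemble_mat A U S"
  let ?y = "col_restr M U i"
  let ?x = "?E *\<^sub>v ?y"
  let ?us = "sorted_list_of_set U"
  let ?ss = "sorted_list_of_set S"
  have Sr: "S \<subseteq> {..<r}" and cS: "card S = ?s" and ci: "cols_lin_indep A S"
    using S A cU unfolding ensemble_sets_def by auto
  have finS: "finite S" using Sr finite_subset by blast
  have finU: "finite U" using U finite_subset by blast
  have P: "?P \<in> carrier_mat ?s ?s" using sub_mat_carrier[of A U S] cS by simp
  obtain Q where Q: "mat_inverse ?P = Some Q" "?P * Q = 1\<^sub>m ?s" "Q \<in> carrier_mat ?s ?s"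
    using sub_inv[OF A U cU ri S] by blast
  have E: "?E \<in> carrier_mat r ?s" using A unfolding ensemble_mat_def by simp
  have y: "?y \<in> carrier_vec ?s" unfolding col_restr_def by simp
  have M: "M \<in> carrier_mat m n" using MAW A W by simp
  show xc: "?x \<in> carrier_vec r" using E y by simp
  have xe: "?x $ j = (\<Sum>b<?s. ?E $$ (j,b) * ?y $ b)" if j: "j < r" for j
    using E y j by (simp add: scalar_prod_def lessThan_atLeast0)
  show x0: "?x $ j = 0" if j: "j < r" "j \<notin> S" for j
    unfolding xe[OF j(1)] by (intro sum.neutral ballI) (use j A in \<open>simp add: ensemble_mat_def\<close>)
  let ?qy = "Q *\<^sub>v ?y"
  have xS: "?x $ j = ?qy $ (card {k\<in>S. k < j})" if j: "j \<in> S" for j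
  proof -
    have jr: "j < r" using j Sr by auto
    have idx: "card {k\<in>S. k < j} < ?s" using sl_nth_idx[OF finS j] cS by simp
    have "?x $ j = (\<Sum>b<?s. Q $$ (card {k\<in>S. k < j}, b) * ?y $ b)"
      unfolding xe[OF jr] by (rule sum.cong) (use j jr A Q(1) in \<open>auto simp: ensemble_mat_def\<close>)
    also have "\<dots> = ?qy $ (card {k\<in>S. k < j})"
      using Q(3) y idx by (simp add: scalar_prod_def lessThan_atLeast0)
    finally show ?thesis .
  qed
  have AxU: "(A *\<^sub>v ?x) $ u = col M i $ u" if u: "u \<in> U" for u
  proof -
    obtain a where a: "a < ?s" "?us ! a = u" using sl_nth_idx[OF finU u] by blast
    have um: "u < m" using u U by auto
    have "(A *\<^sub>v ?x) $ u = (\<Sum>j\<in>S. ?x $ j * A $$ (u,j))"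
      by (rule mult_supp[OF A xc um Sr x0])
    also have "\<dots> = (\<Sum>j\<in>S. ?qy $ (card {k\<in>S. k < j}) * A $$ (u,j))"
      by (rule sum.cong) (use xS in auto)
    also have "\<dots> = (\<Sum>b<card S. ?qy $ (card {k\<in>S. k < ?ss ! b}) * A $$ (u,?ss ! b))"
      by (rule sl_sum[OF finS, symmetric])
    also have "\<dots> = (\<Sum>b<?s. ?P $$ (a,b) * ?qy $ b)"
      by (rule sum.cong) (use a cS sl_idx[OF finS] in \<open>auto simp: sub_mat_def\<close>)
    also have "\<dots> = (?P *\<^sub>v ?qy) $ a"
      using P Q(3) y a by (simp add: scalar_prod_def lessThan_atLeast0)
    also have "?P *\<^sub>v ?qy = (?P * Q) *\<^sub>v ?y"
      using assoc_mult_mat_vec[OF P Q(3) y] by simp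
    also have "\<dots> = ?y" using Q(2) y by simp
    also have "?y $ a = M $$ (u, i)" using a unfolding col_restr_def by simp
    also have "\<dots> = col M i $ u" using M um i by simp
    finally show ?thesis .
  qed
  have wc: "col W i \<in> carrier_vec r" using W by (simp add: carrier_vecI)
  have cM: "col M i = A *\<^sub>v col W i" using MAW col_mult2[OF A W i] by simp
  show "A *\<^sub>v ?x = col M i"
  proof (rule eq_vecI)
    show "dim_vec (A *\<^sub>v ?x) = dim_vec (col M i)" using A M by simp
    fix k assume "k < dim_vec (col M i)"
    hence k: "k < m" using M by simp
    obtain d where d: "\<forall>l<r. A $$ (k,l) = (\<Sum>u\<in>U. d u * A $$ (u,l))"
      using row_span[OF A U cU ri k] by blast
    have "(A *\<^sub>v ?x) $ k = (\<Sum>u\<in>U. d u * (A *\<^sub>v ?x) $ u)" by (rule rowcomb[OF A xc k U d])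
    also have "\<dots> = (\<Sum>u\<in>U. d u * (A *\<^sub>v col W i) $ u)"
      by (rule sum.cong) (use AxU cM in auto)
    also have "\<dots> = (A *\<^sub>v col W i) $ k" by (rule rowcomb[OF A wc k U d, symmetric])
    finally show "(A *\<^sub>v ?x) $ k = col M i $ k" using cM by simp
  qed
qed




lemma supp_zero: "j < dim_vec x \<Longrightarrow> j \<notin> supp_vec x \<Longrightarrow> x $ j = 0"
  unfolding supp_vec_def by auto

lemma adm_supp:
  fixes A :: "real mat"
  assumes A: "A \<in> carrier_mat m r" and x: "x \<in> carrier_vec r" and nn: "\<And>j. j < r \<Longrightarrow> x $ j \<ge> 0"
    and v: "v = A *\<^sub>v x"
  shows "col_admissible A (supp_vec x) v"
  unfolding col_admissible_def
proof (intro exI conjI)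
  show "\<forall>j\<in>supp_vec x. x $ j \<ge> 0" using nn x unfolding supp_vec_def by auto
  have Ss: "supp_vec x \<subseteq> {..<r}" using supp_sub[of x] x by simp
  show "v = vec (dim_row A) (\<lambda>k. \<Sum>j\<in>supp_vec x. x $ j * A $$ (k,j))"
  proof (rule eq_vecI)
    show "dim_vec v = dim_vec (vec (dim_row A) (\<lambda>k. \<Sum>j\<in>supp_vec x. x $ j * A $$ (k,j)))"
      using v A by simp
    fix k assume "k < dim_vec (vec (dim_row A) (\<lambda>k. \<Sum>j\<in>supp_vec x. x $ j * A $$ (k,j)))"
    hence k: "k < m" using A by simp
    have "v $ k = (\<Sum>j\<in>supp_vec x. x $ j * A $$ (k,j))"
      unfolding v by (rule mult_supp[OF A x k Ss]) (use x supp_zero in auto)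
    thus "v $ k = vec (dim_row A) (\<lambda>k. \<Sum>j\<in>supp_vec x. x $ j * A $$ (k,j)) $ k" using k A by simp
  qed
qed

lemma carath:
  fixes A :: "real mat"
  assumes A: "A \<in> carrier_mat m r" and w: "w \<in> carrier_vec r" and nn: "\<And>j. j < r \<Longrightarrow> w $ j \<ge> 0"
    and L: "L = supp_vec w" and v: "v = A *\<^sub>v w"
    and mn: "\<forall>T. T \<subseteq> {..<r} \<and> col_admissible A T v \<longrightarrow> T = L \<or> set_lex_less L T"
  shows "cols_lin_indep A L"
proof (rule ccontr)
  assume "\<not> cols_lin_indep A L"
  then obtain c0 j0 where c0: "\<forall>k<dim_row A. (\<Sum>j\<in>L. c0 j * A $$ (k,j)) = 0" and j0: "j0 \<in> L" "c0 j0 \<noteq> 0"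
    unfolding cols_lin_indep_def by blast
  have Lr: "L \<subseteq> {..<r}" using L supp_sub[of w] w by simp
  have finL: "finite L" using Lr finite_subset by blast
  obtain c where c: "\<And>k. k < m \<Longrightarrow> (\<Sum>j\<in>L. c j * A $$ (k,j)) = 0" and cj0: "c j0 > 0"
  proof (cases "c0 j0 > 0")
    case True thus ?thesis using that[of c0] c0 A by auto
  next
    case False
    hence "(- c0 j0) > 0" using j0(2) by simp
    moreover have "\<And>k. k < m \<Longrightarrow> (\<Sum>j\<in>L. (- c0 j) * A $$ (k,j)) = 0"
    proof -
      fix k assume "k < m"
      hence "(\<Sum>j\<in>L. c0 j * A $$ (k,j)) = 0" using c0 A by simp
      thus "(\<Sum>j\<in>L. (- c0 j) * A $$ (k,j)) = 0" by (simp add: sum_negf)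
    qed
    ultimately show ?thesis using that[of "\<lambda>j. - c0 j"] by blast
  qed
  define D where "D = {j\<in>L. c j > 0}"
  have finD: "finite D" using finL D_def by simp
  have neD: "D \<noteq> {}" using j0 cj0 D_def by blast
  define t where "t = Min ((\<lambda>j. w $ j / c j) ` D)"
  have "t \<in> (\<lambda>j. w $ j / c j) ` D" unfolding t_def by (rule Min_in) (use finD neD in auto)
  then obtain j1 where j1: "j1 \<in> D" "t = w $ j1 / c j1" by blast
  have tle: "t \<le> w $ j / c j" if "j \<in> D" for j
    unfolding t_def by (rule Min_le) (use finD that in auto)
  have j1L: "j1 \<in> L" and cj1: "c j1 > 0" using j1(1) D_def by auto
  have wj1: "w $ j1 \<ge> 0" using nn j1L Lr by auto
  have t0: "t \<ge> 0" using j1(2) wj1 cj1 by simp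
  define \<alpha> where "\<alpha> = (\<lambda>j. w $ j - t * c j)"
  have \<alpha>nn: "\<alpha> j \<ge> 0" if j: "j \<in> L" for j
  proof (cases "c j > 0")
    case True
    hence "j \<in> D" using j D_def by simp
    hence "t \<le> w $ j / c j" by (rule tle)
    hence "t * c j \<le> w $ j" using True by (simp add: pos_le_divide_eq)
    thus ?thesis unfolding \<alpha>_def by simp
  next
    case False
    hence "t * c j \<le> 0" using t0 by (simp add: mult_nonneg_nonpos)
    moreover have "w $ j \<ge> 0" using nn j Lr by auto
    ultimately show ?thesis unfolding \<alpha>_def by simp
  qed
  have \<alpha>j1: "\<alpha> j1 = 0" unfolding \<alpha>_def j1(2) using cj1 by simp
  let ?L' = "L - {j1}"
  have adm: "col_admissible A ?L' v"
    unfolding col_admissible_def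
  proof (intro exI conjI)
    show "\<forall>j\<in>?L'. \<alpha> j \<ge> 0" using \<alpha>nn by auto
    show "v = vec (dim_row A) (\<lambda>k. \<Sum>j\<in>?L'. \<alpha> j * A $$ (k,j))"
    proof (rule eq_vecI)
      show "dim_vec v = dim_vec (vec (dim_row A) (\<lambda>k. \<Sum>j\<in>?L'. \<alpha> j * A $$ (k,j)))"
        using v A by simp
      fix k assume "k < dim_vec (vec (dim_row A) (\<lambda>k. \<Sum>j\<in>?L'. \<alpha> j * A $$ (k,j)))"
      hence k: "k < m" using A by simp
      have vk: "v $ k = (\<Sum>j\<in>L. w $ j * A $$ (k,j))"
        unfolding v by (rule mult_supp[OF A w k Lr]) (use w supp_zero L in auto)
      have "(\<Sum>j\<in>L. \<alpha> j * A $$ (k,j)) = (\<Sum>j\<in>L. w $ j * A $$ (k,j)) - t * (\<Sum>j\<in>L. c j * A $$ (k,j))"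
        unfolding \<alpha>_def by (simp add: left_diff_distrib sum_subtractf sum_distrib_left mult.assoc)
      also have "\<dots> = v $ k" using c[OF k] vk by simp
      finally have e1: "(\<Sum>j\<in>L. \<alpha> j * A $$ (k,j)) = v $ k" .
      have "(\<Sum>j\<in>L. \<alpha> j * A $$ (k,j)) = \<alpha> j1 * A $$ (k,j1) + (\<Sum>j\<in>?L'. \<alpha> j * A $$ (k,j))"
        by (rule sum.remove[OF finL j1L])
      hence "(\<Sum>j\<in>?L'. \<alpha> j * A $$ (k,j)) = v $ k" using e1 \<alpha>j1 by simp
      thus "v $ k = vec (dim_row A) (\<lambda>k. \<Sum>j\<in>?L'. \<alpha> j * A $$ (k,j)) $ k" using k A by simp
    qed
  qed
  have "?L' \<subseteq> {..<r}" using Lr by auto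
  hence "?L' = L \<or> set_lex_less L ?L'" using mn adm by blast
  moreover have "?L' \<noteq> L" using j1L by blast
  moreover have "card ?L' < card L" by (rule card_Diff1_less[OF finL j1L])
  ultimately show False using lex_card_less by blast
qed


theorem mainTheorem4:
  fixes M A W :: "real mat" and m n r s :: nat and U :: "nat set"
  assumes "M \<in> carrier_mat m n" and "A \<in> carrier_mat m r" and "W \<in> carrier_mat r n"
    and "nonneg_mat M" and "nonneg_mat A" and "nonneg_mat W"
    and "stable_factorization M A W"
    and "s = mat_rank A"
    and "U \<subseteq> {..<m}" and "card U = s" and "rows_lin_indep A U"
    and "i < n"
  shows "col W i \<in> {ensemble_mat A U S *\<^sub>v col_restr M U i | S. S \<in> ensemble_sets A}
       \<and> nonneg_vec (col W i)
       \<and> (\<forall>x \<in> {ensemble_mat A U S *\<^sub>v col_restr M U i | S. S \<in> ensemble_sets A}.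
            nonneg_vec x \<and> x \<noteq> col W i \<longrightarrow> set_lex_less (supp_vec (col W i)) (supp_vec x))"
proof -
  note Mc = assms(1) and A = assms(2) and W = assms(3)
  note U = assms(9) and ri = assms(11) and i = assms(12)
  have cU: "card U = mat_rank A" using assms(8,10) by simp
  have MAW: "M = A * W" using assms(7) unfolding stable_factorization_def by blast
  have stW: "\<And>l. l < r \<Longrightarrow> W $$ (l,i) \<noteq> 0 \<Longrightarrow> l \<in> lex_first r (\<lambda>S. col_admissible A S (col M i))"
    using assms(7) Mc A W i unfolding stable_factorization_def by auto
  let ?Mi = "col M i"
  let ?Wi = "col W i"
  let ?P = "\<lambda>S. col_admissible A S ?Mi"
  define L where "L = lex_first r ?P"
  have wc: "?Wi \<in> carrier_vec r" using W by (simp add: carrier_vecI)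
  have cM: "?Mi = A *\<^sub>v ?Wi" using MAW col_mult2[OF A W i] by simp
  have Wnn: "\<And>j. j < r \<Longrightarrow> ?Wi $ j \<ge> 0" using assms(6) W i unfolding nonneg_mat_def by simp
  have suppr: "supp_vec ?Wi \<subseteq> {..<r}" using supp_sub[of ?Wi] W by simp
  have admW: "?P (supp_vec ?Wi)" by (rule adm_supp[OF A wc Wnn cM])
  have LC: "L \<subseteq> {..<r} \<and> ?P L \<and> (\<forall>T. T \<subseteq> {..<r} \<and> ?P T \<longrightarrow> T = L \<or> set_lex_less L T)"
    unfolding L_def by (rule lex_first_char[where P="?P", OF suppr admW])
  have Lr: "L \<subseteq> {..<r}" and mn: "\<forall>T. T \<subseteq> {..<r} \<and> ?P T \<longrightarrow> T = L \<or> set_lex_less L T"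
    using LC by auto
  have finL: "finite L" using Lr finite_subset by blast
  have sWL: "supp_vec ?Wi \<subseteq> L"
  proof
    fix l assume "l \<in> supp_vec ?Wi"
    hence l: "l < r" "?Wi $ l \<noteq> 0" using W unfolding supp_vec_def by auto
    hence "W $$ (l,i) \<noteq> 0" using W i by simp
    thus "l \<in> L" unfolding L_def by (rule stW[OF l(1)])
  qed
  have eqL: "supp_vec ?Wi = L"
  proof (rule ccontr)
    assume ne: "supp_vec ?Wi \<noteq> L"
    hence lt: "set_lex_less L (supp_vec ?Wi)" using mn suppr admW by blast
    have "card (supp_vec ?Wi) < card L"
      using psubset_card_mono[OF finL] sWL ne by blast
    thus False using lt lex_card_less by blast
  qed
  have indL: "cols_lin_indep A L"
    using carath[OF A wc _ eqL[symmetric] cM mn] Wnn by blast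
  have WzL: "\<And>j. j < r \<Longrightarrow> j \<notin> L \<Longrightarrow> ?Wi $ j = 0"
    using supp_zero[of _ ?Wi] eqL W by auto
  have "fam_indep m (col A) L" using cols_lin_indep_fam[OF A Lr] indL by simp
  from vec_space.fam_F4[OF A Lr this]
  obtain S where S: "L \<subseteq> S" "S \<subseteq> {..<r}" "card S = vec_space.rank m A" "fam_indep m (col A) S"
    by blast
  have Sens: "S \<in> ensemble_sets A"
    unfolding ensemble_sets_def mat_rank_def using S A cols_lin_indep_fam[OF A S(2)] by auto
  have part1: "?Wi \<in> {ensemble_mat A U S *\<^sub>v col_restr M U i | S. S \<in> ensemble_sets A}"
  proof -
    let ?x = "ensemble_mat A U S *\<^sub>v col_restr M U i"
    note ea = ens_apply[OF A W MAW i U cU ri Sens]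
    have indS: "cols_lin_indep A S" using Sens unfolding ensemble_sets_def by auto
    have "?x = ?Wi"
    proof (rule uniq_supp[OF A S(2) indS ea(1) wc])
      show "\<And>j. j < r \<Longrightarrow> j \<notin> S \<Longrightarrow> ?x $ j = 0" by (rule ea(2))
      show "\<And>j. j < r \<Longrightarrow> j \<notin> S \<Longrightarrow> ?Wi $ j = 0" using WzL S(1) by blast
      show "A *\<^sub>v ?x = A *\<^sub>v ?Wi" using ea(3) cM by simp
    qed
    hence "\<exists>S'. ?Wi = ensemble_mat A U S' *\<^sub>v col_restr M U i \<and> S' \<in> ensemble_sets A"
      using Sens by metis
    thus ?thesis by simp
  qed
  have part2: "nonneg_vec ?Wi" unfolding nonneg_vec_def using Wnn W by simp
  have part3: "\<forall>x \<in> {ensemble_mat A U S *\<^sub>v col_restr M U i | S. S \<in> ensemble_sets A}.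
            nonneg_vec x \<and> x \<noteq> ?Wi \<longrightarrow> set_lex_less (supp_vec ?Wi) (supp_vec x)"
  proof (intro ballI impI)
    fix x assume "x \<in> {ensemble_mat A U S *\<^sub>v col_restr M U i | S. S \<in> ensemble_sets A}"
    then obtain S' where S': "S' \<in> ensemble_sets A" "x = ensemble_mat A U S' *\<^sub>v col_restr M U i" by blast
    assume h: "nonneg_vec x \<and> x \<noteq> ?Wi"
    note ea = ens_apply[OF A W MAW i U cU ri S'(1)]
    have xc: "x \<in> carrier_vec r" using ea(1) S'(2) by simp
    have Ax: "?Mi = A *\<^sub>v x" using ea(3) S'(2) by simp
    have xnn: "\<And>j. j < r \<Longrightarrow> x $ j \<ge> 0" using h xc unfolding nonneg_vec_def by simp
    have adx: "?P (supp_vec x)" by (rule adm_supp[OF A xc xnn Ax])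
    have sxr: "supp_vec x \<subseteq> {..<r}" using supp_sub[of x] xc by simp
    have "supp_vec x = L \<or> set_lex_less L (supp_vec x)" using mn adx sxr by blast
    moreover have "supp_vec x \<noteq> L"
    proof
      assume sx: "supp_vec x = L"
      have "x = ?Wi"
      proof (rule uniq_supp[OF A Lr indL xc wc])
        show "\<And>j. j < r \<Longrightarrow> j \<notin> L \<Longrightarrow> x $ j = 0" using supp_zero[of _ x] sx xc by auto
        show "\<And>j. j < r \<Longrightarrow> j \<notin> L \<Longrightarrow> ?Wi $ j = 0" by (rule WzL)
        show "A *\<^sub>v x = A *\<^sub>v ?Wi" using Ax cM by simp
      qed
      thus False using h by simp
    qed
    ultimately show "set_lex_less (supp_vec ?Wi) (supp_vec x)" using eqL by simp
  qed
  show ?thesis using part1 part2 part3 by blast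
qed


end
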